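(* Consider the system $$\dot v=(-\mu_1-p_{11}v^2+p_{12}A^2)v-M_2 s,\quad \dot A=(-\mu_2-p_{21}v^2+p_{22}A^2)A+M_3 s,\quad \dot s=2\alpha(v+M_1 s)s,$$ under the standing assumptions of the context, and fix $\mu_2=\mu_2^0>0$. If $\mu_1<0$ is taken sufficiently close to $0$, then "the solution" satisfies $s(t)=O(|\mu_1|)$ for all $t>0$.
   Context: Standing assumptions: $\alpha>0$, $M_1\in\mathbb R$, $M_2>0$, $M_3>0$, $p_{11},p_{12},p_{21},p_{22}>0$, $p_{12}p_{21}<p_{11}p_{22}$. (The paper's further hypotheses on the underlying PDE impose no condition on this ODE.) For $\mu_1<0$ let $v_{\rm ep2}=\sqrt{-\mu_1/p_{11}}$ and $\widetilde{\mathrm{EP}}_2^\pm=(\pm v_{\rm ep2},0,0)$ in $(v,A,s)$-coordinates; $\widetilde{\mathrm{EP}}_2^+$ has the positive eigenvalue $2\alpha v_{\rm ep2}$, and "the solution" is the trajectory emanating from $\widetilde{\mathrm{EP}}_2^+$ at $t=-\infty$ along this unstable direction into $s>0$. $O(|\mu_1|)$ means bounded by a constant times $|\mu_1|$ as $\mu_1\to0$. *)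

theory Defs
  imports "HOL-Analysis.Analysis"
begin

definition solves_sys ::
  "real \<Rightarrow> real \<Rightarrow> real \<Rightarrow> real \<Rightarrow> real \<Rightarrow> real \<Rightarrow> real \<Rightarrow> real \<Rightarrow> real \<Rightarrow> real
   \<Rightarrow> ereal \<Rightarrow> (real \<Rightarrow> real) \<Rightarrow> (real \<Rightarrow> real) \<Rightarrow> (real \<Rightarrow> real) \<Rightarrow> bool" where
  "solves_sys \<alpha> M1 M2 M3 p11 p12 p21 p22 \<mu>1 \<mu>2 T v A s \<longleftrightarrow>
     (\<forall>t. ereal t < T \<longrightarrow>
        (v has_real_derivative ((- \<mu>1 - p11 * (v t)^2 + p12 * (A t)^2) * v t - M2 * s t)) (at t) \<and>
        (A has_real_derivative ((- \<mu>2 - p21 * (v t)^2 + p22 * (A t)^2) * A t + M3 * s t)) (at t) \<and>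
        (s has_real_derivative (2 * \<alpha> * (v t + M1 * s t) * s t)) (at t))"

definition v_ep2 :: "real \<Rightarrow> real \<Rightarrow> real" where
  "v_ep2 p11 \<mu>1 = sqrt (- \<mu>1 / p11)"

text \<open>"The solution": a solution (on {t. t < T}) emanating from EP2+ = (v_ep2,0,0)
  at t = -infinity into the half-space s > 0.\<close>
definition the_solution ::
  "real \<Rightarrow> real \<Rightarrow> real \<Rightarrow> real \<Rightarrow> real \<Rightarrow> real \<Rightarrow> real \<Rightarrow> real \<Rightarrow> real \<Rightarrow> real
   \<Rightarrow> ereal \<Rightarrow> (real \<Rightarrow> real) \<Rightarrow> (real \<Rightarrow> real) \<Rightarrow> (real \<Rightarrow> real) \<Rightarrow> bool" where
  "the_solution \<alpha> M1 M2 M3 p11 p12 p21 p22 \<mu>1 \<mu>2 T v A s \<longleftrightarrow>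
     solves_sys \<alpha> M1 M2 M3 p11 p12 p21 p22 \<mu>1 \<mu>2 T v A s \<and>
     (v \<longlongrightarrow> v_ep2 p11 \<mu>1) at_bot \<and> (A \<longlongrightarrow> 0) at_bot \<and> (s \<longlongrightarrow> 0) at_bot \<and>
     (\<forall>t. ereal t < T \<longrightarrow> s t > 0)"

end

theory Submission
  imports Defs
begin


definition FG :: "real \<Rightarrow> real \<Rightarrow> real \<Rightarrow> real \<Rightarrow> real \<Rightarrow> real \<Rightarrow> real \<Rightarrow> real \<Rightarrow> real \<Rightarrow> real \<Rightarrow> real" where
  "FG a P M1 M2 p12 k w U \<sigma> B =
     -(P + 3 * k * U^2) * M2 * \<sigma>
     + (2 * a * U + P * w + 3 * k * w * U^2) * ((P - P * (U - M1 * w * \<sigma>)^2 + p12 * w^2 * B^2) * (U - M1 * w * \<sigma>) + 2 * a * M1 * U * \<sigma>)"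

lemma FG0: assumes "3 * k * M2 = 4 * a^2 * M1" "M2 * \<sigma> = 2 * a - a * U^2"
  shows "FG a P M1 M2 p12 k 0 U \<sigma> B = a * P * (3 * U^2 - 2 * U^4 - 2)"
proof -
  have "FG a P M1 M2 p12 k 0 U \<sigma> B = -(P * (M2 * \<sigma>)) - U^2 * (3 * k * M2) * \<sigma> + 2 * a * U * ((P - P * U^2) * U + 2 * a * M1 * U * \<sigma>)"
    unfolding FG_def by (simp add: algebra_simps power2_eq_square)
  also have "\<dots> = a * P * (3 * U^2 - 2 * U^4 - 2)" unfolding assms
    by (simp add: algebra_simps power2_eq_square power4_eq_xxxx)
  finally show ?thesis .
qed

lemma GP_id:
  "M2 * (2 * a * (w * U) * (w^2 * \<sigma>)) + (2 * a * (w * U) + P * w^2 + 3 * k * (w * U)^2) * ((P * w^2 - P * (w * U - M1 * (w^2 * \<sigma>))^2 + p12 * (w^2 * B)^2) * (w * U - M1 * (w^2 * \<sigma>)) - M2 * (w^2 * \<sigma>) + 2 * a * M1 * (w * U) * (w^2 * \<sigma>))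
   = w^4 * FG a P M1 M2 p12 k w U \<sigma> B"
  unfolding FG_def by algebra

definition sgm :: "real \<Rightarrow> real \<Rightarrow> real \<Rightarrow> real \<Rightarrow> real \<Rightarrow> real \<Rightarrow> real" where
  "sgm a P k M2 w U = inverse M2 * (2 * a - a * U^2 - w * (P * U + k * U^3))"

lemma quart: "3 * X - 2 * X^2 - 2 \<le> -(7/8::real)"
proof -
  have "0 \<le> 2 * (X - 3/4)^2" by simp
  thus ?thesis by (simp add: power2_eq_square algebra_simps)
qed

lemma FF_small:
  assumes "M2 > 0" "a > 0" "P > 0" "D \<ge> 0" "3 * k * M2 = 4 * a^2 * M1"
  shows "\<exists>\<eta>>0. \<forall>w U B. 0 \<le> w \<and> w \<le> 1 \<and> \<bar>U\<bar> \<le> 2 \<and> \<bar>B\<bar> \<le> D \<and> w < \<eta> \<longrightarrow>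
     FG a P M1 M2 p12 k w U (sgm a P k M2 w U) B < 0"
proof -
  define S where "S = {0..1::real} \<times> {-2..2::real} \<times> {-D..D}"
  define f where "f = (\<lambda>x::real\<times>real\<times>real. FG a P M1 M2 p12 k (fst x) (fst (snd x)) (sgm a P k M2 (fst x) (fst (snd x))) (snd (snd x)))"
  have cS: "compact S" unfolding S_def by (intro compact_Times compact_Icc)
  have cf: "continuous_on S f" unfolding f_def FG_def sgm_def by (auto intro!: continuous_intros)
  have uc: "uniformly_continuous_on S f" using compact_uniformly_continuous[OF cf cS] .
  have e: "(7/16) * a * P > 0" using assms by simp
  obtain d where d: "d > 0" and dd: "\<forall>x\<in>S. \<forall>x'\<in>S. dist x' x < d \<longrightarrow> dist (f x') (f x) < (7/16) * a * P"
    using uc e unfolding uniformly_continuous_on_def by metis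
  show ?thesis
  proof (intro exI[of _ d] conjI allI impI d)
    fix w U B :: real assume h: "0 \<le> w \<and> w \<le> 1 \<and> \<bar>U\<bar> \<le> 2 \<and> \<bar>B\<bar> \<le> D \<and> w < d"
    have x1: "(w,U,B) \<in> S" and x0: "(0,U,B) \<in> S" using h assms unfolding S_def by auto
    have "dist (w,U,B) (0::real,U,B) = w" using h by (simp add: dist_Pair_Pair)
    hence "dist (w,U,B) (0::real,U,B) < d" using h by simp
    hence "dist (f (w,U,B)) (f (0,U,B)) < (7/16) * a * P" using dd x1 x0 by blast
    hence "\<bar>f (w,U,B) - f (0,U,B)\<bar> < (7/16) * a * P" by (simp only: dist_real_def)
    hence lt: "f (w,U,B) < f (0,U,B) + (7/16) * a * P" by linarith
    have "M2 * sgm a P k M2 0 U = 2 * a - a * U^2" unfolding sgm_def using assms by (simp add: field_simps)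
    hence "f (0,U,B) = a * P * (3 * U^2 - 2 * U^4 - 2)" unfolding f_def using FG0[OF assms(5)] by simp
    also have "\<dots> \<le> a * P * (-(7/8))"
    proof (rule mult_left_mono)
      have "(U^2)^2 = U^4" by (simp add: power4_eq_xxxx power2_eq_square)
      thus "3 * U^2 - 2 * U^4 - 2 \<le> -(7/8)" using quart[of "U^2"] by simp
    qed (use assms in auto)
    finally have "f (0,U,B) \<le> a * P * (-(7/8))" .
    hence "f (w,U,B) < 0" using lt e by argo
    thus "FG a P M1 M2 p12 k w U (sgm a P k M2 w U) B < 0" by (simp add: f_def)
  qed
qed

lemma ubound:
  fixes a P M2 w k u s :: real
  assumes "a > 0" "P > 0" "M2 > 0" "w > 0" "(3 * P + 27 * \<bar>k\<bar>) * w \<le> a/4"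
    and "\<bar>u\<bar> \<le> 3 * w" "s > 0"
    and "M2 * s + a * u^2 + P * w^2 * u + k * u^3 - 2 * a * w^2 \<le> 0"
  shows "u^2 < (9/4) * w^2" "M2 * s \<le> 3 * a * w^2"
proof -
  have u3: "\<bar>u\<bar>^3 \<le> (3 * w)^3" using assms(6) by (intro power_mono) auto
  have "\<bar>P * w^2 * u\<bar> = P * w^2 * \<bar>u\<bar>" using assms by (simp add: abs_mult)
  also have "\<dots> \<le> P * w^2 * (3 * w)" using assms by (intro mult_left_mono) auto
  finally have t1: "\<bar>P * w^2 * u\<bar> \<le> 3 * P * w^3" by (simp add: power3_eq_cube power2_eq_square)
  have "\<bar>k * u^3\<bar> = \<bar>k\<bar> * \<bar>u\<bar>^3" by (simp add: abs_mult power_abs)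
  also have "\<dots> \<le> \<bar>k\<bar> * (3 * w)^3" using u3 by (intro mult_left_mono) auto
  finally have t2: "\<bar>k * u^3\<bar> \<le> 27 * \<bar>k\<bar> * w^3" by (simp add: power3_eq_cube)
  have "(3 * P + 27 * \<bar>k\<bar>) * w * w^2 \<le> (a/4) * w^2" using assms(5) by (intro mult_right_mono) auto
  hence t3: "3 * P * w^3 + 27 * \<bar>k\<bar> * w^3 \<le> (a/4) * w^2" by (simp add: algebra_simps power3_eq_cube power2_eq_square)
  have Ms: "M2 * s > 0" using assms by simp
  have au: "a * u^2 \<ge> 0" using assms by simp
  have "a * u^2 < (9/4) * a * w^2" using t1 t2 t3 Ms assms(8) by (simp only: abs_le_iff) linarith
  thus "u^2 < (9/4) * w^2" using assms(1) by simp
  show "M2 * s \<le> 3 * a * w^2" using t1 t2 t3 au assms(8) by (simp only: abs_le_iff) linarith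
qed

definition GPf where
  "GPf a P M1 M2 p12 k w v A s =
     M2 * (2 * a * (v + M1 * s) * s) + (2 * a * (v + M1 * s) + P * w^2 + 3 * k * (v + M1 * s)^2) * ((P * w^2 - P * v^2 + p12 * A^2) * v - M2 * s + 2 * a * M1 * (v + M1 * s) * s)"

lemma Gneg:
  fixes a P M1 M2 p12 k w v A s D \<eta> :: real
  assumes "a > 0" "P > 0" "M2 > 0" "w > 0" "w \<le> 1" "(3 * P + 27 * \<bar>k\<bar>) * w \<le> a/4"
    and "3 * k * M2 = 4 * a^2 * M1" "D \<ge> 0"
    and eta: "\<forall>w U B. 0 \<le> w \<and> w \<le> 1 \<and> \<bar>U\<bar> \<le> 2 \<and> \<bar>B\<bar> \<le> D \<and> w < \<eta> \<longrightarrow>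
       FG a P M1 M2 p12 k w U (sgm a P k M2 w U) B < 0" "w < \<eta>"
    and "\<bar>v + M1 * s\<bar> \<le> 3 * w" "s > 0" "A^2 \<le> (D * w^2)^2"
    and g0: "M2 * s + a * (v + M1 * s)^2 + P * w^2 * (v + M1 * s) + k * (v + M1 * s)^3 - 2 * a * w^2 = 0"
  shows "GPf a P M1 M2 p12 k w v A s < 0"
proof -
  define u where "u = v + M1 * s"
  define U where "U = u/w"
  define B where "B = A/w^2"
  have uU: "u = w * U" unfolding U_def using assms(4) by simp
  have AB: "A = w^2 * B" unfolding B_def using assms(4) by simp
  have g0': "M2 * s + a * u^2 + P * w^2 * u + k * u^3 - 2 * a * w^2 \<le> 0" using g0 unfolding u_def by simp
  have uabs: "\<bar>u\<bar> \<le> 3 * w" using assms(11) unfolding u_def .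
  have u2: "u^2 < (9/4) * w^2" using ubound(1)[where u=u and s=s and k=k, OF assms(1-4,6) uabs assms(12) g0'] .
  have "U^2 < 9/4" using u2 assms(4) unfolding uU by (simp add: power_mult_distrib)
  hence "U^2 \<le> 2^2" by simp
  hence "\<bar>U\<bar> \<le> \<bar>2\<bar>" by (simp only: abs_le_square_iff)
  hence U2: "\<bar>U\<bar> \<le> 2" by simp
  have "(w^2 * \<bar>B\<bar>)^2 \<le> (w^2 * D)^2" using assms(13) unfolding AB by (simp add: power_mult_distrib mult.commute)
  hence "w^2 * \<bar>B\<bar> \<le> w^2 * D" using power2_le_imp_le assms(8) by simp
  hence B2: "\<bar>B\<bar> \<le> D" using assms(4) by simp
  define \<sigma> where "\<sigma> = sgm a P k M2 w U"
  have "M2 * s = 2 * a * w^2 - a * u^2 - P * w^2 * u - k * u^3" using g0 unfolding u_def by simp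
  moreover have "w^2 * (2 * a - a * U^2 - w * (P * U + k * U^3)) = 2 * a * w^2 - a * u^2 - P * w^2 * u - k * u^3"
    unfolding uU by algebra
  ultimately have "w^2 * \<sigma> = inverse M2 * (M2 * s)" unfolding \<sigma>_def sgm_def by simp
  hence s\<sigma>: "s = w^2 * \<sigma>" using assms(3) by simp
  have vv: "v = w * U - M1 * (w^2 * \<sigma>)" using u_def uU s\<sigma> by simp
  have "GPf a P M1 M2 p12 k w v A s = w^4 * FG a P M1 M2 p12 k w U \<sigma> B"
    unfolding GPf_def FG_def vv unfolding s\<sigma> AB by algebra
  moreover have "FG a P M1 M2 p12 k w U \<sigma> B < 0" unfolding \<sigma>_def
    using eta U2 B2 assms(4,5,10) less_imp_le[OF assms(4)] by blast
  ultimately show ?thesis using assms(4) by (simp add: mult_pos_neg)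
qed



lemma Hneg:
  fixes a M2 M3 mu2 p21 p22 D w A s v :: real
  assumes "a > 0" "M2 > 0" "M3 > 0" "mu2 > 0" "p21 > 0" "w > 0"
    and Dd: "D = 12 * a * M3 / (M2 * mu2)"
    and "p22 * (D * w^2)^2 \<le> mu2 / 2"
    and A2: "A^2 = (D * w^2)^2" and "s > 0" and "M2 * s \<le> 3 * a * w^2"
  shows "2 * A * ((- mu2 - p21 * v^2 + p22 * A^2) * A + M3 * s) < 0"
proof -
  define c where "c = D * w^2"
  have Dpos: "D > 0" using assms unfolding Dd by simp
  have cpos: "c > 0" unfolding c_def using Dpos assms by simp
  have "\<bar>A\<bar>^2 = c^2" using A2 unfolding c_def by simp
  hence absA: "\<bar>A\<bar> = c" using power2_eq_imp_eq[of "\<bar>A\<bar>" c] cpos by simp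
  have e1: "2 * A * ((- mu2 - p21 * v^2 + p22 * A^2) * A + M3 * s)
      = 2 * (- mu2 + p22 * A^2) * A^2 - 2 * p21 * v^2 * A^2 + 2 * M3 * (A * s)"
    by (simp add: algebra_simps power2_eq_square)
  have t1: "2 * p21 * v^2 * A^2 \<ge> 0" using assms by simp
  have "A \<le> c" using absA abs_ge_self[of A] by simp
  hence "A * s \<le> c * s" using assms(10) by (intro mult_right_mono) auto
  hence t2: "M3 * (A * s) \<le> M3 * (c * s)" using assms(3) by simp
  have "M3 * s \<le> M3 * (3 * a * w^2 / M2)" using assms(2,3,11) by (simp add: field_simps)
  also have "\<dots> = mu2 * c / 4" unfolding c_def Dd using assms(2,4) by (simp add: field_simps)
  finally have "M3 * s \<le> mu2 * c / 4" .
  hence "c * (M3 * s) \<le> c * (mu2 * c / 4)" using cpos by (intro mult_left_mono) auto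
  hence t3: "M3 * (c * s) \<le> mu2 * c^2 / 4" by (simp add: power2_eq_square algebra_simps)
  have t4: "p22 * A^2 \<le> mu2/2" using assms(8) A2 by simp
  have "(- mu2 + p22 * A^2) * A^2 \<le> (- mu2/2) * A^2" using t4 by (intro mult_right_mono) auto
  hence t5: "(- mu2 + p22 * A^2) * A^2 \<le> - mu2/2 * c^2" using A2 unfolding c_def by simp
  have "mu2 * c^2 > 0" using cpos assms by simp
  thus ?thesis unfolding e1 using t1 t2 t3 t5 by linarith
qed



lemma first_bad:
  fixes \<phi> :: "real \<Rightarrow> real" and T :: ereal
  assumes cont: "\<And>t. ereal t < T \<Longrightarrow> isCont \<phi> t"
    and ev: "eventually (\<lambda>t. \<phi> t < 0) at_bot"
    and t1: "ereal t1 < T" "\<phi> t1 \<ge> 0"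
  shows "\<exists>\<tau>. ereal \<tau> < T \<and> \<phi> \<tau> = 0 \<and> (\<forall>t<\<tau>. \<phi> t < 0)"
proof -
  obtain ta0 where ta0: "\<And>t. t \<le> ta0 \<Longrightarrow> \<phi> t < 0" using ev unfolding eventually_at_bot_linorder by blast
  define ta where "ta = min ta0 t1"
  have ta: "\<And>t. t \<le> ta \<Longrightarrow> \<phi> t < 0" using ta0 unfolding ta_def by simp
  have tat1: "ta < t1" using ta[of t1] t1(2) unfolding ta_def by (cases "ta0 < t1") auto
  have lessT: "\<And>t. t \<le> t1 \<Longrightarrow> ereal t < T" using t1(1) by (meson ereal_less_eq(3) order_le_less_trans)
  have co: "continuous_on {ta..t1} \<phi>"
    using cont lessT by (intro continuous_at_imp_continuous_on) auto
  define K where "K = {x \<in> {ta..t1}. 0 \<le> \<phi> x}"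
  have "closed K" unfolding K_def
    by (rule continuous_on_closed_Collect_le[OF continuous_on_const co closed_atLeastAtMost])
  moreover have "bounded K" unfolding K_def by (rule bounded_subset[OF bounded_closed_interval]) auto
  ultimately have cK: "compact K" by (simp add: compact_eq_bounded_closed)
  have neK: "K \<noteq> {}" unfolding K_def using t1 tat1 by auto
  obtain \<tau> where \<tau>K: "\<tau> \<in> K" and \<tau>min: "\<And>x. x \<in> K \<Longrightarrow> \<tau> \<le> x"
    using compact_attains_inf[OF cK neK] by blast
  have \<tau>1: "ta \<le> \<tau>" "\<tau> \<le> t1" "0 \<le> \<phi> \<tau>" using \<tau>K unfolding K_def by auto
  have below: "\<forall>t<\<tau>. \<phi> t < 0"
  proof (intro allI impI)
    fix t assume "t < \<tau>"
    show "\<phi> t < 0"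
    proof (cases "t \<le> ta")
      case True thus ?thesis using ta by simp
    next
      case False
      hence "t \<notin> K" using \<tau>min \<open>t < \<tau>\<close> by force
      thus ?thesis using False \<open>t < \<tau>\<close> \<tau>1 unfolding K_def by auto
    qed
  qed
  have "continuous_on {ta..\<tau>} \<phi>" by (rule continuous_on_subset[OF co]) (use \<tau>1 in auto)
  then obtain c where c: "ta \<le> c" "c \<le> \<tau>" "\<phi> c = 0"
    using IVT'[of \<phi> ta 0 \<tau>] ta[of ta] \<tau>1 by auto
  have "c \<in> K" using c \<tau>1 unfolding K_def by auto
  hence "c = \<tau>" using \<tau>min c by force
  thus ?thesis using c below lessT \<tau>1 by auto
qed



lemma deriv_g:
  fixes v s A :: "real \<Rightarrow> real"
  assumes dv: "(v has_real_derivative ((- \<mu>1 - p11 * (v t)^2 + p12 * (A t)^2) * v t - M2 * s t)) (at t)"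
    and ds: "(s has_real_derivative (2 * \<alpha> * (v t + M1 * s t) * s t)) (at t)"
    and mw: "- \<mu>1 = p11 * w^2"
  shows "((\<lambda>t. M2 * s t + \<alpha> * (v t + M1 * s t)^2 + p11 * w^2 * (v t + M1 * s t) + k * (v t + M1 * s t)^3 - 2 * \<alpha> * w^2)
     has_real_derivative GPf \<alpha> p11 M1 M2 p12 k w (v t) (A t) (s t)) (at t)"
proof -
  define v' where "v' = (- \<mu>1 - p11 * (v t)^2 + p12 * (A t)^2) * v t - M2 * s t"
  define s' where "s' = 2 * \<alpha> * (v t + M1 * s t) * s t"
  have du: "((\<lambda>t. v t + M1 * s t) has_real_derivative (v' + M1 * s')) (at t)"
    using dv ds unfolding v'_def s'_def by (intro DERIV_add DERIV_cmult) auto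
  have d2: "((\<lambda>t. (v t + M1 * s t)^2) has_real_derivative (of_nat 2 * ((v' + M1 * s') * (v t + M1 * s t)^(2 - Suc 0)))) (at t)"
    by (rule DERIV_power[OF du])
  have d3: "((\<lambda>t. (v t + M1 * s t)^3) has_real_derivative (of_nat 3 * ((v' + M1 * s') * (v t + M1 * s t)^(3 - Suc 0)))) (at t)"
    by (rule DERIV_power[OF du])
  have ds': "(s has_real_derivative s') (at t)" using ds unfolding s'_def .
  have "((\<lambda>t. M2 * s t + \<alpha> * (v t + M1 * s t)^2 + p11 * w^2 * (v t + M1 * s t) + k * (v t + M1 * s t)^3 - 2 * \<alpha> * w^2)
     has_real_derivative (M2 * s' + \<alpha> * (of_nat 2 * ((v' + M1 * s') * (v t + M1 * s t)^(2 - Suc 0)))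
        + p11 * w^2 * (v' + M1 * s') + k * (of_nat 3 * ((v' + M1 * s') * (v t + M1 * s t)^(3 - Suc 0))) - 0)) (at t)"
    by (intro DERIV_diff DERIV_add DERIV_cmult ds' d2 d3 du DERIV_const)
  moreover have "M2 * s' + \<alpha> * (of_nat 2 * ((v' + M1 * s') * (v t + M1 * s t)^(2 - Suc 0)))
        + p11 * w^2 * (v' + M1 * s') + k * (of_nat 3 * ((v' + M1 * s') * (v t + M1 * s t)^(3 - Suc 0))) - 0
      = GPf \<alpha> p11 M1 M2 p12 k w (v t) (A t) (s t)"
    unfolding GPf_def v'_def s'_def mw by (simp add: power2_eq_square) algebra
  ultimately show ?thesis by simp
qed

lemma deriv_h:
  fixes A :: "real \<Rightarrow> real"
  assumes dA: "(A has_real_derivative ((- \<mu>2 - p21 * (v t)^2 + p22 * (A t)^2) * A t + M3 * s t)) (at t)"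
  shows "((\<lambda>t. (A t)^2 - c) has_real_derivative 2 * A t * ((- \<mu>2 - p21 * (v t)^2 + p22 * (A t)^2) * A t + M3 * s t)) (at t)"
proof -
  have "((\<lambda>t. (A t)^2 - c) has_real_derivative (of_nat 2 * (((- \<mu>2 - p21 * (v t)^2 + p22 * (A t)^2) * A t + M3 * s t) * (A t)^(2 - Suc 0)) - 0)) (at t)"
    by (intro DERIV_diff DERIV_power dA DERIV_const)
  thus ?thesis by (rule DERIV_cong) (simp add: algebra_simps)
qed



theorem lemma3:
  fixes \<alpha> M1 M2 M3 p11 p12 p21 p22 \<mu>2 :: real
  assumes "\<alpha> > 0" "M2 > 0" "M3 > 0"
    and "p11 > 0" "p12 > 0" "p21 > 0" "p22 > 0" "p12 * p21 < p11 * p22"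
    and "\<mu>2 > 0"
  shows "\<exists>\<delta>>0. \<exists>C. \<forall>\<mu>1 T v A s.
           - \<delta> < \<mu>1 \<and> \<mu>1 < 0 \<and>
           the_solution \<alpha> M1 M2 M3 p11 p12 p21 p22 \<mu>1 \<mu>2 T v A s \<longrightarrow>
           (\<forall>t>0. ereal t < T \<longrightarrow> \<bar>s t\<bar> \<le> C * \<bar>\<mu>1\<bar>)"
proof -
  define k where "k = 4 * \<alpha>^2 * M1 / (3 * M2)"
  have k3: "3 * k * M2 = 4 * \<alpha>^2 * M1" unfolding k_def using assms(2) by simp
  define D where "D = 12 * \<alpha> * M3 / (M2 * \<mu>2)"
  have Dpos: "D > 0" unfolding D_def using assms by simp
  obtain \<eta> where \<eta>: "\<eta> > 0" and eta: "\<forall>w U B. 0 \<le> w \<and> w \<le> 1 \<and> \<bar>U\<bar> \<le> 2 \<and> \<bar>B\<bar> \<le> D \<and> w < \<eta> \<longrightarrow>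
       FG \<alpha> p11 M1 M2 p12 k w U (sgm \<alpha> p11 k M2 w U) B < 0"
    using FF_small[OF assms(2,1,4) less_imp_le[OF Dpos] k3] by blast
  define c1 where "c1 = 3 * p11 + 27 * \<bar>k\<bar>"
  have c1pos: "c1 > 0" unfolding c1_def using assms(4) by simp
  define w0 where "w0 = min (1/2) (min (\<eta>/2) (min (\<alpha> / (4 * c1)) (\<mu>2 / (2 * (p22 * D^2 + 1)))))"
  have pp: "p22 * D^2 + 1 > 0" using assms(7) by (simp add: add_nonneg_pos)
  have w0pos: "w0 > 0" unfolding w0_def using \<eta> c1pos assms(1,9) pp by simp
  define \<delta> where "\<delta> = p11 * w0^2"
  define C where "C = 3 * \<alpha> / (p11 * M2)"
  show ?thesis
  proof (rule exI[of _ \<delta>], rule conjI[rotated], rule exI[of _ C], intro allI impI)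
    show "\<delta> > 0" unfolding \<delta>_def using assms(4) w0pos by simp
    fix \<mu>1 T v A s t
    assume H: "- \<delta> < \<mu>1 \<and> \<mu>1 < 0 \<and> the_solution \<alpha> M1 M2 M3 p11 p12 p21 p22 \<mu>1 \<mu>2 T v A s"
      and tpos: "t > 0" and tT: "ereal t < T"
    have sol: "solves_sys \<alpha> M1 M2 M3 p11 p12 p21 p22 \<mu>1 \<mu>2 T v A s"
      and lv: "(v \<longlongrightarrow> v_ep2 p11 \<mu>1) at_bot" and lA: "(A \<longlongrightarrow> 0) at_bot" and ls: "(s \<longlongrightarrow> 0) at_bot"
      and spos: "\<And>t. ereal t < T \<Longrightarrow> s t > 0"
      using H unfolding the_solution_def by auto
    have mu1: "- \<delta> < \<mu>1" "\<mu>1 < 0" using H by auto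
    define w where "w = v_ep2 p11 \<mu>1"
    have wsq: "w = sqrt (- \<mu>1 / p11)" unfolding w_def v_ep2_def ..
    have q0: "- \<mu>1 / p11 > 0" using mu1 assms(4) by (simp add: divide_neg_pos)
    have wpos: "w > 0" unfolding wsq using q0 by simp
    have w2: "w^2 = - \<mu>1 / p11" unfolding wsq using q0 by simp
    have mw: "- \<mu>1 = p11 * w^2" unfolding w2 using assms(4) by simp
    have "p11 * w^2 < p11 * w0^2" using mw mu1 unfolding \<delta>_def by simp
    hence "w^2 < w0^2" using assms(4) by simp
    hence ww0: "w < w0" using power_less_imp_less_base[of w 2 w0] w0pos by simp
    have w1: "w \<le> 1" using ww0 unfolding w0_def by simp
    have weta: "w < \<eta>" using ww0 \<eta> unfolding w0_def by simp
    have "w \<le> \<alpha> / (4 * c1)" using ww0 unfolding w0_def by simp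
    hence "c1 * w \<le> c1 * (\<alpha> / (4 * c1))" using c1pos by (intro mult_left_mono) auto
    hence wc1: "(3 * p11 + 27 * \<bar>k\<bar>) * w \<le> \<alpha> / 4" using c1pos unfolding c1_def[symmetric] by simp
    have wmu: "w \<le> \<mu>2 / (2 * (p22 * D^2 + 1))" using ww0 unfolding w0_def by simp
    have w3: "w^3 \<le> 1" using w1 wpos by (simp add: power_le_one)
    have w4: "w^4 \<le> w" using w3 wpos mult_left_mono[OF w3, of w]
      by (simp add: power3_eq_cube power4_eq_xxxx mult.assoc)
    have "p22 * (D * w^2)^2 = (p22 * D^2) * w^4" by (simp add: power_mult_distrib power4_eq_xxxx power2_eq_square)
    also have "\<dots> \<le> (p22 * D^2) * w" using w4 assms(7) by (intro mult_left_mono) auto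
    also have "\<dots> \<le> (p22 * D^2) * (\<mu>2 / (2 * (p22 * D^2 + 1)))" using wmu assms(7) by (intro mult_left_mono) auto
    also have "\<dots> \<le> \<mu>2 / 2"
    proof -
      have "(p22 * D^2) * (\<mu>2 / (2 * (p22 * D^2 + 1))) = (\<mu>2 / 2) * ((p22 * D^2) / (p22 * D^2 + 1))" by simp
      also have "\<dots> \<le> (\<mu>2 / 2) * 1" using pp assms(9) by (intro mult_left_mono) auto
      finally show ?thesis by simp
    qed
    finally have wD: "p22 * (D * w^2)^2 \<le> \<mu>2 / 2" .
    define u where "u = (\<lambda>t. v t + M1 * s t)"
    define g where "g = (\<lambda>t. M2 * s t + \<alpha> * (v t + M1 * s t)^2 + p11 * w^2 * (v t + M1 * s t) + k * (v t + M1 * s t)^3 - 2 * \<alpha> * w^2)"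
    define hh where "hh = (\<lambda>t. (A t)^2 - (D * w^2)^2)"
    define q where "q = (\<lambda>t. (v t + M1 * s t)^2 - 9 * w^2)"
    define \<phi> where "\<phi> = (\<lambda>t. max (g t) (max (hh t) (q t)))"
    have dv: "\<And>t. ereal t < T \<Longrightarrow> (v has_real_derivative ((- \<mu>1 - p11 * (v t)^2 + p12 * (A t)^2) * v t - M2 * s t)) (at t)"
      and dA: "\<And>t. ereal t < T \<Longrightarrow> (A has_real_derivative ((- \<mu>2 - p21 * (v t)^2 + p22 * (A t)^2) * A t + M3 * s t)) (at t)"
      and ds: "\<And>t. ereal t < T \<Longrightarrow> (s has_real_derivative (2 * \<alpha> * (v t + M1 * s t) * s t)) (at t)"
      using sol unfolding solves_sys_def by blast+
    have dg: "\<And>t. ereal t < T \<Longrightarrow> (g has_real_derivative GPf \<alpha> p11 M1 M2 p12 k w (v t) (A t) (s t)) (at t)"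
      unfolding g_def by (rule deriv_g[OF dv ds mw])
    have dh: "\<And>t. ereal t < T \<Longrightarrow> (hh has_real_derivative 2 * A t * ((- \<mu>2 - p21 * (v t)^2 + p22 * (A t)^2) * A t + M3 * s t)) (at t)"
      unfolding hh_def by (rule deriv_h[OF dA])
    have cont: "\<And>t. ereal t < T \<Longrightarrow> isCont \<phi> t"
    proof -
      fix t assume "ereal t < T"
      hence cv: "isCont v t" and cA: "isCont A t" and cs: "isCont s t"
        using DERIV_isCont dv dA ds by blast+
      show "isCont \<phi> t" unfolding \<phi>_def g_def hh_def q_def
        by (intro continuous_intros cv cA cs)
    qed
    have lv': "(v \<longlongrightarrow> w) at_bot" using lv unfolding w_def .
    have limg: "(g \<longlongrightarrow> (M2 * 0 + \<alpha> * (w + M1 * 0)^2 + p11 * w^2 * (w + M1 * 0) + k * (w + M1 * 0)^3 - 2 * \<alpha> * w^2)) at_bot"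
      unfolding g_def by (intro tendsto_intros lv' ls)
    have limh: "(hh \<longlongrightarrow> (0^2 - (D * w^2)^2)) at_bot" unfolding hh_def by (intro tendsto_intros lA)
    have limq: "(q \<longlongrightarrow> ((w + M1 * 0)^2 - 9 * w^2)) at_bot" unfolding q_def by (intro tendsto_intros lv' ls)
    have Lg: "M2 * 0 + \<alpha> * (w + M1 * 0)^2 + p11 * w^2 * (w + M1 * 0) + k * (w + M1 * 0)^3 - 2 * \<alpha> * w^2 < 0"
    proof -
      have "(p11 + k) * w \<le> (3 * p11 + 27 * \<bar>k\<bar>) * w" using wpos assms(4) by (intro mult_right_mono) auto
      hence "(p11 + k) * w \<le> \<alpha> / 4" using wc1 by simp
      hence "(p11 + k) * w * w^2 \<le> \<alpha> / 4 * w^2" by (intro mult_right_mono) auto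
      moreover have "\<alpha> * w^2 > 0" using assms(1) wpos by simp
      ultimately show ?thesis by (simp add: algebra_simps power3_eq_cube power2_eq_square)
    qed
    have Lh: "0^2 - (D * w^2)^2 < (0::real)" using Dpos wpos by simp
    have Lq: "(w + M1 * 0)^2 - 9 * w^2 < (0::real)" using wpos by simp
    have limphi: "(\<phi> \<longlongrightarrow> max (M2 * 0 + \<alpha> * (w + M1 * 0)^2 + p11 * w^2 * (w + M1 * 0) + k * (w + M1 * 0)^3 - 2 * \<alpha> * w^2)
        (max (0^2 - (D * w^2)^2) ((w + M1 * 0)^2 - 9 * w^2))) at_bot"
      unfolding \<phi>_def by (intro tendsto_max limg limh limq)
    have ev: "eventually (\<lambda>t. \<phi> t < 0) at_bot"
      by (rule order_tendstoD(2)[OF limphi]) (use Lg Lh Lq in simp)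
    have ubd: "\<And>t. ereal t < T \<Longrightarrow> g t \<le> 0 \<Longrightarrow> q t \<le> 0 \<Longrightarrow>
        \<bar>v t + M1 * s t\<bar> \<le> 3 * w \<and> (v t + M1 * s t)^2 < (9/4) * w^2 \<and> M2 * s t \<le> 3 * \<alpha> * w^2"
    proof -
      fix t assume tT: "ereal t < T" and gt: "g t \<le> 0" and qt: "q t \<le> 0"
      have "\<bar>v t + M1 * s t\<bar>^2 \<le> (3 * w)^2" using qt unfolding q_def by (simp add: power_mult_distrib)
      hence ua: "\<bar>v t + M1 * s t\<bar> \<le> 3 * w" using power2_le_imp_le[of "\<bar>v t + M1 * s t\<bar>" "3 * w"] wpos by simp
      have g': "M2 * s t + \<alpha> * (v t + M1 * s t)^2 + p11 * w^2 * (v t + M1 * s t) + k * (v t + M1 * s t)^3 - 2 * \<alpha> * w^2 \<le> 0"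
        using gt unfolding g_def by simp
      show "\<bar>v t + M1 * s t\<bar> \<le> 3 * w \<and> (v t + M1 * s t)^2 < (9/4) * w^2 \<and> M2 * s t \<le> 3 * \<alpha> * w^2"
        using ubound[OF assms(1,4,2) wpos wc1 ua spos[OF tT] g'] ua by blast
    qed
    have allneg: "\<And>t. ereal t < T \<Longrightarrow> \<phi> t < 0"
    proof (rule ccontr)
      fix t1 assume t1T: "ereal t1 < T" and "\<not> \<phi> t1 < 0"
      hence "\<phi> t1 \<ge> 0" by simp
      then obtain \<tau> where \<tau>T: "ereal \<tau> < T" and \<phi>\<tau>: "\<phi> \<tau> = 0" and below: "\<forall>t<\<tau>. \<phi> t < 0"
        using first_bad[OF cont ev t1T] by blast
      have gt: "g \<tau> \<le> 0" and ht: "hh \<tau> \<le> 0" and qt: "q \<tau> \<le> 0" using \<phi>\<tau> unfolding \<phi>_def by auto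
      have s\<tau>: "s \<tau> > 0" using spos[OF \<tau>T] .
      have U: "\<bar>v \<tau> + M1 * s \<tau>\<bar> \<le> 3 * w" "(v \<tau> + M1 * s \<tau>)^2 < (9/4) * w^2" "M2 * s \<tau> \<le> 3 * \<alpha> * w^2"
        using ubd[OF \<tau>T gt qt] by auto
      have "(9/4) * w^2 \<le> 9 * w^2" by simp
      hence "q \<tau> < 0" using U(2) unfolding q_def by linarith
      hence cases: "g \<tau> = 0 \<or> hh \<tau> = 0" using \<phi>\<tau> gt ht unfolding \<phi>_def by linarith
      have contra: "False" if d: "(f has_real_derivative d') (at \<tau>)" and dn: "d' < 0" and f0: "f \<tau> = 0"
        and fle: "\<And>t. f t \<le> \<phi> t" for f d'
      proof -
        obtain d where d0: "d > 0" and dd: "\<forall>h>0. h < d \<longrightarrow> f \<tau> < f (\<tau> - h)"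
          using DERIV_neg_dec_left[OF d dn] by blast
        have "f \<tau> < f (\<tau> - d/2)" using dd d0 by simp
        moreover have "\<phi> (\<tau> - d/2) < 0" using below d0 by simp
        ultimately show False using f0 fle[of "\<tau> - d/2"] by simp
      qed
      show False
      proof (cases "g \<tau> = 0")
        case True
        have A2: "(A \<tau>)^2 \<le> (D * w^2)^2" using ht unfolding hh_def by simp
        have g0: "M2 * s \<tau> + \<alpha> * (v \<tau> + M1 * s \<tau>)^2 + p11 * w^2 * (v \<tau> + M1 * s \<tau>) + k * (v \<tau> + M1 * s \<tau>)^3 - 2 * \<alpha> * w^2 = 0"
          using True unfolding g_def by simp
        have "GPf \<alpha> p11 M1 M2 p12 k w (v \<tau>) (A \<tau>) (s \<tau>) < 0"
          by (rule Gneg[OF assms(1,4,2) wpos w1 wc1 k3 less_imp_le[OF Dpos] eta weta U(1) s\<tau> A2 g0])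
        thus False using contra[OF dg[OF \<tau>T] _ True] unfolding \<phi>_def by simp
      next
        case False
        hence h0: "hh \<tau> = 0" using cases by simp
        have Aeq: "(A \<tau>)^2 = (D * w^2)^2" using h0 unfolding hh_def by simp
        have "2 * A \<tau> * ((- \<mu>2 - p21 * (v \<tau>)^2 + p22 * (A \<tau>)^2) * A \<tau> + M3 * s \<tau>) < 0"
          by (rule Hneg[OF assms(1,2,3,9,6) wpos D_def wD Aeq s\<tau> U(3)])
        thus False by (rule contra[OF dh[OF \<tau>T] _ h0]) (simp add: \<phi>_def)
      qed
    qed
    have "\<phi> t < 0" using allneg[OF tT] .
    hence "g t \<le> 0" "q t \<le> 0" unfolding \<phi>_def by auto
    hence "M2 * s t \<le> 3 * \<alpha> * w^2" using ubd[OF tT] by blast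
    hence "s t \<le> 3 * \<alpha> * w^2 / M2" using assms(2) by (simp add: field_simps)
    also have "\<dots> = C * \<bar>\<mu>1\<bar>" unfolding C_def using mw mu1 assms(2,4) by (simp add: field_simps)
    finally have fin: "s t \<le> C * \<bar>\<mu>1\<bar>" .
    show "\<bar>s t\<bar> \<le> C * \<bar>\<mu>1\<bar>" using fin spos[OF tT] by simp
  qed
qed

end
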